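(* For every $k\in\mathbb N$, $$\frac{E(u_{k+1})}{\|u_{k+1}\|_{L^{n+1}(\Omega,\mu)}}\le\frac{E(u_k)}{\|u_k\|_{L^{n+1}(\Omega,\mu)}},$$ equivalently $R(u_{k+1})\|u_{k+1}\|^n_{L^{n+1}(\Omega,\mu)}\le R(u_k)\|u_k\|^n_{L^{n+1}(\Omega,\mu)}$.
   Context: $\Omega\Subset\mathbb C^n$ bounded strictly pseudoconvex, $0<f\in C^\infty(\bar\Omega)$, $dV$ Euclidean volume form, $\mu=f\,dV$, $dd^c=i\partial\bar\partial$, $(dd^c u)^n$ the complex Monge–Ampère measure. For a bounded negative plurisubharmonic $\phi\not\equiv0$ with $\int_\Omega(dd^c\phi)^n<\infty$: $E(\phi)=\frac1{n+1}\int_\Omega(-\phi)(dd^c\phi)^n$, $I_\mu(\phi)=\frac1{n+1}\int_\Omega(-\phi)^{n+1}d\mu=\frac1{n+1}\|\phi\|^{n+1}_{L^{n+1}(\Omega,\mu)}$, $R(\phi)=E(\phi)/I_\mu(\phi)$. The sequence $(u_k)$: $u_0\in PSH(\Omega)\cap C^{0,1}(\bar\Omega)$ with $(dd^cu_0)^n\ge f\,dV$, $u_0\le0$ on $\partial\Omega$, $\int_\Omega(dd^cu_0)^n<\infty$; and $u_{k+1}\in PSH(\Omega)\cap C^0(\bar\Omega)$ is the unique solution of $(dd^cu_{k+1})^n=R(u_k)(-u_k)^nf\,dV$ on $\Omega$, $u_{k+1}=0$ on $\partial\Omega$. *)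

theory Defs
  imports "HOL-Analysis.Analysis"
begin

text \<open>Points of C^n are vectors of type complex^'n, n = CARD('n).
  Iterated directional (Frechet) derivatives: dd [v1,...,vk] u = d_v1 ... d_vk u.\<close>

fun dd :: "('a::real_normed_vector) list \<Rightarrow> ('a \<Rightarrow> real) \<Rightarrow> 'a \<Rightarrow> real" where
  "dd [] u = u"
| "dd (v # vs) u = (\<lambda>x. frechet_derivative (dd vs u) (at x) v)"

definition C2_on :: "'a::real_normed_vector set \<Rightarrow> ('a \<Rightarrow> real) \<Rightarrow> bool" where
  "C2_on U u \<longleftrightarrow> (\<forall>vs. length vs \<le> 2 \<longrightarrow>
      continuous_on U (dd vs u) \<and> (length vs < 2 \<longrightarrow> (\<forall>x\<in>U. dd vs u differentiable (at x))))"

definition smooth_on :: "'a::real_normed_vector set \<Rightarrow> ('a \<Rightarrow> real) \<Rightarrow> bool" where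
  "smooth_on U u \<longleftrightarrow> (\<forall>vs. continuous_on U (dd vs u) \<and> (\<forall>x\<in>U. dd vs u differentiable (at x)))"

text \<open>Complex Hessian u_{j kbar} = d^2 u / (dz_j dzbar_k) at x.\<close>
definition cHess :: "(complex^'n \<Rightarrow> real) \<Rightarrow> complex^'n \<Rightarrow> complex^'n^'n" where
  "cHess u x = (\<chi> j k. (1/4) * (complex_of_real (dd [axis j 1, axis k 1] u x)
      + complex_of_real (dd [axis j \<i>, axis k \<i>] u x)
      + \<i> * (complex_of_real (dd [axis j 1, axis k \<i>] u x) - complex_of_real (dd [axis j \<i>, axis k 1] u x))))"

text \<open>Density of (dd^c u)^n = (i ddbar u)^n w.r.t. Euclidean volume, for C^2 u:
  (i ddbar u)^n = 2^n n! det(u_{j kbar}) dV.\<close>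
definition MA_density :: "(complex^'n \<Rightarrow> real) \<Rightarrow> complex^'n \<Rightarrow> real" where
  "MA_density u x = 2 ^ CARD('n) * fact CARD('n) * Re (det (cHess u x))"

definition psh :: "(complex^'n) set \<Rightarrow> (complex^'n \<Rightarrow> real) \<Rightarrow> bool" where
  "psh \<Omega> u \<longleftrightarrow>
     (\<forall>x\<in>\<Omega>. \<forall>e>0. \<exists>d>0. \<forall>y\<in>\<Omega>. dist y x < d \<longrightarrow> u y < u x + e) \<and>
     (\<forall>a b. (\<forall>z. cmod z \<le> 1 \<longrightarrow> a + z *s b \<in> \<Omega>) \<longrightarrow>
        (\<lambda>t. u (a + cis t *s b)) integrable_on {0..2*pi} \<and>
        u a \<le> integral {0..2*pi} (\<lambda>t. u (a + cis t *s b)) / (2*pi))"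

definition strictly_pseudoconvex :: "(complex^'n) set \<Rightarrow> bool" where
  "strictly_pseudoconvex \<Omega> \<longleftrightarrow> open \<Omega> \<and> bounded \<Omega> \<and>
     (\<exists>U \<rho>. open U \<and> closure \<Omega> \<subseteq> U \<and> C2_on U \<rho> \<and> \<Omega> = {z\<in>U. \<rho> z < 0} \<and>
        (\<forall>z\<in>frontier \<Omega>. frechet_derivative \<rho> (at z) \<noteq> (\<lambda>v. 0)) \<and>
        (\<forall>z\<in>U. \<forall>w. w \<noteq> 0 \<longrightarrow>
            Re (\<Sum>j\<in>UNIV. \<Sum>k\<in>UNIV. cHess \<rho> z $ j $ k * w $ j * cnj (w $ k)) > 0))"

text \<open>nu is the complex Monge-Ampere measure (dd^c u)^n of the continuous psh function u on
  the open set Omega (Bedford-Taylor): a Borel measure carried by Omega, finite on compacts of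
  Omega, and the weak limit of (dd^c v_j)^n dV for every sequence of C^2 psh v_j converging
  locally uniformly to u on any open U contained in Omega (tested on C_c(U)).\<close>
definition MA_measure :: "(complex^'n) set \<Rightarrow> (complex^'n \<Rightarrow> real) \<Rightarrow> (complex^'n) measure \<Rightarrow> bool" where
  "MA_measure \<Omega> u \<nu> \<longleftrightarrow> sets \<nu> = sets lborel \<and> emeasure \<nu> (UNIV - \<Omega>) = 0 \<and>
     (\<forall>K. compact K \<and> K \<subseteq> \<Omega> \<longrightarrow> emeasure \<nu> K < \<infinity>) \<and>
     (\<forall>U v \<phi>. open U \<and> U \<subseteq> \<Omega> \<and> (\<forall>j. C2_on U (v j) \<and> psh U (v j)) \<and>
        (\<forall>K. compact K \<and> K \<subseteq> U \<longrightarrow> uniform_limit K v u sequentially) \<and>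
        continuous_on UNIV \<phi> \<and> compact (closure {z. \<phi> z \<noteq> 0}) \<and> closure {z. \<phi> z \<noteq> 0} \<subseteq> U
        \<longrightarrow> ((\<lambda>j. LINT z|lborel. \<phi> z * MA_density (v j) z) \<longlonglongrightarrow> (LINT z|\<nu>. \<phi> z)))"

text \<open>E(phi) = 1/(n+1) int (-phi) (dd^c phi)^n, with nu = (dd^c phi)^n.\<close>
definition energy :: "(complex^'n) measure \<Rightarrow> (complex^'n \<Rightarrow> real) \<Rightarrow> real" where
  "energy \<nu> \<phi> = (1 / (real CARD('n) + 1)) * (LINT z|\<nu>. - \<phi> z)"

text \<open>I_mu(phi) with mu = f dV on Omega.\<close>
definition I_mu :: "(complex^'n) set \<Rightarrow> (complex^'n \<Rightarrow> real) \<Rightarrow> (complex^'n \<Rightarrow> real) \<Rightarrow> real" where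
  "I_mu \<Omega> f \<phi> = (1 / (real CARD('n) + 1)) *
     (LINT z|lborel. indicator \<Omega> z * (- \<phi> z) ^ (CARD('n) + 1) * f z)"

definition Lnorm :: "(complex^'n) set \<Rightarrow> (complex^'n \<Rightarrow> real) \<Rightarrow> (complex^'n \<Rightarrow> real) \<Rightarrow> real" where
  "Lnorm \<Omega> f \<phi> = (LINT z|lborel. indicator \<Omega> z * \<bar>\<phi> z\<bar> ^ (CARD('n) + 1) * f z)
       powr (1 / (real CARD('n) + 1))"

end

theory Submission
  imports Defs
begin
lemma norm_axis_c: "norm (axis j (c::complex) :: complex^'n) = cmod c"
proof -
  have "\<And>i. (norm ((axis j c :: complex^'n) $ i))\<^sup>2 = (if i = j then (cmod c)\<^sup>2 else 0)"
    by (simp add: axis_def)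
  then have "(\<Sum>i\<in>UNIV. (norm ((axis j c :: complex^'n) $ i))\<^sup>2) = (cmod c)\<^sup>2"
    by simp
  then show ?thesis by (simp add: norm_vec_def L2_set_def)
qed

lemma max_principle:
  fixes \<Omega> :: "(complex^'n) set" and u :: "complex^'n \<Rightarrow> real"
  assumes bd: "bounded \<Omega>" and op: "open \<Omega>" and ps: "psh \<Omega> u"
    and cont: "continuous_on (closure \<Omega>) u" and fr: "\<forall>z\<in>frontier \<Omega>. u z \<le> 0"
    and x: "x \<in> \<Omega>"
  shows "u x \<le> 0"
proof (rule ccontr)
  assume ux: "\<not> u x \<le> 0"
  define K where "K = closure \<Omega>"
  have cK: "compact K" using bd K_def by (simp add: compact_closure)
  have xK: "x \<in> K" using x K_def closure_subset by blast
  obtain m where mK: "m \<in> K" and mmax: "\<forall>y\<in>K. u y \<le> u m"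
    using continuous_attains_sup[OF cK _ cont[folded K_def]] xK by blast
  define M where "M = u m"
  have Mpos: "M > 0" using mmax xK ux M_def by force
  define S where "S = {z\<in>K. u z = M}"
  have "closed S" unfolding S_def
    using continuous_closed_preimage_constant[OF cont[folded K_def]] cK compact_imp_closed by blast
  then have cS: "compact S" using cK S_def
    by (metis (no_types, lifting) compact_Int_closed inf.absorb_iff2 mem_Collect_eq subsetI)
  have SO: "S \<subseteq> \<Omega>"
  proof
    fix z assume "z \<in> S"
    then have "z \<in> K" "u z = M" by (auto simp: S_def)
    then show "z \<in> \<Omega>" using fr Mpos K_def closure_Un_frontier by fastforce
  qed
  have mS: "m \<in> S" using mK M_def S_def by simp
  define j0 :: 'n where "j0 = undefined"
  have "continuous_on S (\<lambda>y. Re (y $ j0))" by (intro continuous_intros)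
  then obtain a where aS: "a \<in> S" and amax: "\<forall>y\<in>S. Re (y $ j0) \<le> Re (a $ j0)"
    using continuous_attains_sup[OF cS] mS by blast
  have aO: "a \<in> \<Omega>" using aS SO by blast
  have ua: "u a = M" using aS S_def by simp
  obtain r where r: "r > 0" "ball a r \<subseteq> \<Omega>" using op aO openE by blast
  define b :: "complex^'n" where "b = axis j0 (complex_of_real (r/2))"
  have disc: "a + z *s b \<in> \<Omega>" if "cmod z \<le> 1" for z
  proof -
    have "z *s b = axis j0 (z * complex_of_real (r/2))"
      by (simp add: b_def vec_eq_iff axis_def)
    then have "norm (z *s b) = cmod z * (r/2)" using r
      by (simp add: norm_axis_c norm_mult)
    also have "\<dots> < r" using that r mult_right_mono[of "cmod z" 1 "r/2"] by linarith
    finally have "a + z *s b \<in> ball a r" by (simp add: dist_norm)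
    then show ?thesis using r by blast
  qed
  define h where "h = (\<lambda>t. u (a + cis t *s b))"
  have ptsO: "a + cis t *s b \<in> \<Omega>" for t using disc by simp
  have ptsK: "a + cis t *s b \<in> K" for t using ptsO K_def closure_subset by blast
  have mean: "u a \<le> integral {0..2*pi} h / (2*pi)"
    using ps disc unfolding psh_def h_def by blast
  have hcont: "continuous_on A h" for A
  proof -
    have "(\<lambda>t. a + cis t *s b) = (\<lambda>t. a + (\<chi> i. cis t * b $ i))"
      by (rule ext) (simp add: vec_eq_iff)
    moreover have "continuous_on A (\<lambda>t. a + (\<chi> i. cis t * b $ i))" by (intro continuous_intros)
    ultimately have "continuous_on A (\<lambda>t. a + cis t *s b)" by metis
    then show ?thesis unfolding h_def
      using continuous_on_compose2[OF cont[folded K_def] _ ] ptsK by blast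
  qed
  have hle: "h t \<le> M" for t using mmax ptsK M_def h_def by simp
  have hlt: "h t < M" if "t \<in> {0..1}" for t
  proof -
    have "cos t > 0" using that pi_gt3 by (intro cos_gt_zero_pi) auto
    then have "Re ((a + cis t *s b) $ j0) > Re (a $ j0)" using r
      by (simp add: b_def)
    then have "a + cis t *s b \<notin> S" using amax by force
    then show ?thesis using hle[of t] ptsK h_def S_def by force
  qed
  have hint: "h integrable_on {c..d}" for c d using hcont integrable_continuous_interval by blast
  have i1: "integral {0..1} h < M"
    using integral_less_real[of 0 1 h "\<lambda>_. M"] hcont hlt by auto
  have i2: "integral {1..2*pi} h \<le> integral {1..2*pi} (\<lambda>_. M)"
    by (rule integral_le) (use hle hint in auto)
  have i3: "integral {1..2*pi} (\<lambda>_. M) = (2*pi - 1) * M" using pi_gt3 by simp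
  have "integral {0..1} h + integral {1..2*pi} h = integral {0..2*pi} h"
    using pi_gt3 hint
    by (intro Henstock_Kurzweil_Integration.integral_combine) auto
  then have "integral {0..2*pi} h < M * (2*pi)" using i1 i2 i3 pi_gt3 by (simp add: algebra_simps)
  then have "integral {0..2*pi} h / (2*pi) < M" using pi_gt_zero by (simp add: divide_simps)
  then show False using mean ua by simp
qed
lemma young_nat:
  fixes x y :: real assumes x: "x \<ge> 0" and y: "y \<ge> 0"
  shows "x^n * y \<le> (real n * x^(n+1) + y^(n+1)) / (real n + 1)"
proof (cases "x = 0 \<or> y = 0 \<or> n = 0")
  case True
  then show ?thesis using x y by (cases n) (auto simp: zero_power)
next
  case False
  then have xp: "x > 0" and yp: "y > 0" and np: "n > 0" using x y by auto
  define N where "N = real n + 1"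
  have Np: "N > 0" using N_def by simp
  have "(x^(n+1)) powr (real n / N) * (y^(n+1)) powr (1 / N) \<le> (real n / N) * x^(n+1) + (1/N) * y^(n+1)"
    using xp yp Np by (intro Youngs_inequality_0) (auto simp: N_def field_simps)
  moreover have "(x^(n+1)) powr (real n / N) = x^n"
  proof -
    have "x^(n+1) = x powr N" using powr_realpow[OF xp, of "n+1"] by (simp add: N_def add.commute)
    then have "(x^(n+1)) powr (real n / N) = (x powr N) powr (real n / N)"
      by simp
    also have "\<dots> = x powr (real n)" using Np by (simp add: powr_powr)
    also have "\<dots> = x^n" using xp by (simp add: powr_realpow)
    finally show ?thesis .
  qed
  moreover have "(y^(n+1)) powr (1 / N) = y"
  proof -
    have "y^(n+1) = y powr N" using powr_realpow[OF yp, of "n+1"] by (simp add: N_def add.commute)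
    then have "(y^(n+1)) powr (1 / N) = (y powr N) powr (1 / N)"
      by simp
    also have "\<dots> = y" using Np yp by (simp add: powr_powr)
    finally show ?thesis .
  qed
  ultimately show ?thesis by (simp add: N_def add_divide_distrib)
qed

lemma holder_nat:
  fixes w F G :: "'a \<Rightarrow> real" and M :: "'a measure"
  assumes w: "\<And>x. w x \<ge> 0" and F: "\<And>x. F x \<ge> 0" and G: "\<And>x. G x \<ge> 0"
    and iF: "integrable M (\<lambda>x. w x * F x ^ (n+1))"
    and iG: "integrable M (\<lambda>x. w x * G x ^ (n+1))"
    and iFG: "integrable M (\<lambda>x. w x * F x ^ n * G x)"
    and al: "\<alpha> > 0" and be: "\<beta> > 0"
    and A: "\<alpha> ^ (n+1) = (LINT x|M. w x * F x ^ (n+1))"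
    and B: "\<beta> ^ (n+1) = (LINT x|M. w x * G x ^ (n+1))"
  shows "(LINT x|M. w x * F x ^ n * G x) \<le> \<alpha> ^ n * \<beta>"
proof -
  define N where "N = real n + 1"
  have Np: "N > 0" using N_def by simp
  have pt: "w x * F x ^ n * G x / (\<alpha>^n * \<beta>) \<le>
      (real n / N) * (w x * F x ^ (n+1)) / \<alpha>^(n+1) + (1/N) * (w x * G x ^ (n+1)) / \<beta>^(n+1)" for x
  proof -
    have "(F x / \<alpha>)^n * (G x / \<beta>) \<le> (real n * (F x / \<alpha>)^(n+1) + (G x / \<beta>)^(n+1)) / N"
      using young_nat[of "F x / \<alpha>" "G x / \<beta>" n] F G al be by (simp add: N_def add.commute)
    then have "w x * ((F x / \<alpha>)^n * (G x / \<beta>)) \<le> w x * ((real n * (F x / \<alpha>)^(n+1) + (G x / \<beta>)^(n+1)) / N)"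
      using w by (rule mult_left_mono)
    then show ?thesis using al be Np
      by (simp add: power_divide field_simps)
  qed
  have "(LINT x|M. w x * F x ^ n * G x / (\<alpha>^n * \<beta>)) \<le>
      (LINT x|M. (real n / N) * (w x * F x ^ (n+1)) / \<alpha>^(n+1) + (1/N) * (w x * G x ^ (n+1)) / \<beta>^(n+1))"
    using iF iG iFG pt by (intro integral_mono) auto
  also have "\<dots> = (real n / N) * (LINT x|M. w x * F x ^ (n+1)) / \<alpha>^(n+1) + (1/N) * (LINT x|M. w x * G x ^ (n+1)) / \<beta>^(n+1)"
    using iF iG by simp
  also have "\<dots> = (real n / N) * \<alpha>^(n+1) / \<alpha>^(n+1) + (1/N) * \<beta>^(n+1) / \<beta>^(n+1)"
    by (simp only: A B)
  also have "\<dots> = real n / N + 1 / N" using al be by simp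
  also have "\<dots> = 1" using Np by (simp add: N_def add_divide_distrib[symmetric])
  finally have "(LINT x|M. w x * F x ^ n * G x) / (\<alpha>^n * \<beta>) \<le> 1" by simp
  then show ?thesis using al be by (simp add: divide_le_eq)
qed
theorem lemma3p4:
  fixes \<Omega> :: "(complex^'n) set"
    and f :: "complex^'n \<Rightarrow> real"
    and u :: "nat \<Rightarrow> complex^'n \<Rightarrow> real"
    and \<nu> :: "nat \<Rightarrow> (complex^'n) measure"
    and k :: nat
  assumes spc: "strictly_pseudoconvex \<Omega>"
    and f_smooth: "\<exists>V g. open V \<and> closure \<Omega> \<subseteq> V \<and> smooth_on V g \<and> (\<forall>z\<in>closure \<Omega>. g z = f z)"
    and f_pos: "\<forall>z\<in>closure \<Omega>. f z > 0"
    and MA: "\<And>j. MA_measure \<Omega> (u j) (\<nu> j)"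
    and u0_psh: "psh \<Omega> (u 0)"
    and u0_lip: "\<exists>C. C-lipschitz_on (closure \<Omega>) (u 0)"
    and u0_bdry: "\<forall>z\<in>frontier \<Omega>. u 0 z \<le> 0"
    and u0_MA: "\<forall>A\<in>sets lborel.
        emeasure (density lborel (\<lambda>z. ennreal (indicator \<Omega> z * f z))) A \<le> emeasure (\<nu> 0) A"
    and u0_fin: "emeasure (\<nu> 0) \<Omega> < \<infinity>"
    and step_psh: "\<And>j. psh \<Omega> (u (Suc j))"
    and step_cont: "\<And>j. continuous_on (closure \<Omega>) (u (Suc j))"
    and step_bdry: "\<And>j. \<forall>z\<in>frontier \<Omega>. u (Suc j) z = 0"
    and step_eq: "\<And>j. \<nu> (Suc j) = density lborel (\<lambda>z. ennreal (indicator \<Omega> z *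
        (energy (\<nu> j) (u j) / I_mu \<Omega> f (u j)) * (- u j z) ^ CARD('n) * f z))"
  shows "energy (\<nu> (Suc k)) (u (Suc k)) / Lnorm \<Omega> f (u (Suc k))
           \<le> energy (\<nu> k) (u k) / Lnorm \<Omega> f (u k)"
proof -
  define N where "N = real CARD('n) + 1"
  have Np: "N > 0" by (simp add: N_def)
  have op: "open \<Omega>" and bd: "bounded \<Omega>" using spc unfolding strictly_pseudoconvex_def by auto
  have Osets: "\<Omega> \<in> sets borel" using op by simp
  obtain V g where V: "open V" "closure \<Omega> \<subseteq> V" "smooth_on V g" "\<forall>z\<in>closure \<Omega>. g z = f z"
    using f_smooth by blast
  have "continuous_on V g" using V(3) unfolding smooth_on_def by (metis dd.simps(1))
  then have "continuous_on (closure \<Omega>) g" using V(2) continuous_on_subset by blast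
  then have fcont: "continuous_on (closure \<Omega>) f" using V(4) continuous_on_eq by blast
  have ucont: "continuous_on (closure \<Omega>) (u j)" for j
  proof (cases j)
    case 0
    obtain C where "C-lipschitz_on (closure \<Omega>) (u 0)" using u0_lip by blast
    then show ?thesis using 0 lipschitz_on_continuous_on by blast
  next
    case (Suc i) then show ?thesis using step_cont by simp
  qed
  have uneg: "u j z \<le> 0" if "z \<in> \<Omega>" for j z
  proof -
    have "psh \<Omega> (u j)" using u0_psh step_psh by (cases j) auto
    moreover have "\<forall>z\<in>frontier \<Omega>. u j z \<le> 0" using u0_bdry step_bdry by (cases j) auto
    ultimately show ?thesis using max_principle[OF bd op _ ucont _ that] by blast
  qed
  have fpos: "f z > 0" if "z \<in> \<Omega>" for z using f_pos that closure_subset by blast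
  have Enn: "energy (\<nu> j) (u j) \<ge> 0" for j
  proof -
    have sets: "sets (\<nu> j) = sets lborel" using MA[of j] unfolding MA_measure_def by blast
    have sp: "space (\<nu> j) = UNIV" using sets_eq_imp_space_eq[OF sets] by simp
    have "UNIV - \<Omega> \<in> sets (\<nu> j)" using sets op by auto
    moreover have "emeasure (\<nu> j) (UNIV - \<Omega>) = 0"
      using MA[of j] unfolding MA_measure_def by (elim conjE) assumption
    ultimately have null: "UNIV - \<Omega> \<in> null_sets (\<nu> j)" by (simp add: null_sets_def)
    have "AE z in \<nu> j. z \<in> \<Omega>" by (rule AE_I'[OF null]) (auto simp: sp)
    then have "AE z in \<nu> j. 0 \<le> - u j z" using uneg by auto
    then have "0 \<le> (LINT z|\<nu> j. - u j z)" by (rule integral_nonneg_AE)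
    then show ?thesis unfolding energy_def by (simp add: divide_nonpos_nonneg)
  qed
  define A where "A j = (LINT z|lborel. indicator \<Omega> z * \<bar>u j z\<bar> ^ (CARD('n) + 1) * f z)" for j
  have Ann: "A j \<ge> 0" for j
    unfolding A_def
    by (intro integral_nonneg_AE AE_I2) (auto simp: indicator_def fpos less_imp_le)
  have Lnorm_eq: "Lnorm \<Omega> f (u j) = A j powr (1 / N)" for j
    unfolding Lnorm_def A_def N_def by simp
  have I_eq: "I_mu \<Omega> f (u j) = A j / N" for j
  proof -
    have "(\<lambda>z. indicator \<Omega> z * (- u j z) ^ (CARD('n) + 1) * f z) =
        (\<lambda>z. indicator \<Omega> z * \<bar>u j z\<bar> ^ (CARD('n) + 1) * f z)"
    proof (rule ext)
      fix z show "indicator \<Omega> z * (- u j z) ^ (CARD('n) + 1) * f z =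
        indicator \<Omega> z * \<bar>u j z\<bar> ^ (CARD('n) + 1) * f z"
        using uneg[of z j] by (cases "z \<in> \<Omega>") (auto simp: abs_of_nonpos)
    qed
    then show ?thesis unfolding I_mu_def A_def N_def by simp
  qed
  define E0 where "E0 = energy (\<nu> k) (u k)"
  define E1 where "E1 = energy (\<nu> (Suc k)) (u (Suc k))"
  have E0nn: "E0 \<ge> 0" using Enn E0_def by simp
  have RHSnn: "0 \<le> E0 / A k powr (1 / N)" using E0nn by simp
  show ?thesis
  proof (cases "E1 \<le> 0 \<or> A (Suc k) = 0")
    case True
    then have "E1 / A (Suc k) powr (1 / N) \<le> 0"
      by (auto intro: divide_nonpos_nonneg)
    then show ?thesis using RHSnn unfolding Lnorm_eq E0_def[symmetric] E1_def[symmetric] by linarith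
  next
    case False
    then have E1p: "E1 > 0" and Bp: "A (Suc k) > 0" using Ann[of "Suc k"] by auto
    define c where "c = E0 / I_mu \<Omega> f (u k)"
    define d where "d z = indicator \<Omega> z * c * (- u k z) ^ CARD('n) * f z" for z
    have cnn: "c \<ge> 0" unfolding c_def I_eq using E0nn Ann[of k] Np by simp
    have dnn: "d z \<ge> 0" for z
      unfolding d_def using cnn uneg[of z k] fpos[of z]
      by (cases "z \<in> \<Omega>") (auto intro!: mult_nonneg_nonneg zero_le_power)
    have nuS: "\<nu> (Suc k) = density lborel (\<lambda>z. ennreal (d z))"
      unfolding d_def c_def E0_def using step_eq by simp
    have setsS: "sets (\<nu> (Suc k)) = sets lborel" by (simp add: nuS)
    have intS: "integrable (\<nu> (Suc k)) (\<lambda>z. - u (Suc k) z)"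
    proof (rule ccontr)
      assume "\<not> ?thesis"
      then have "(LINT z|\<nu> (Suc k). - u (Suc k) z) = 0" by (rule not_integrable_integral_eq)
      then have "E1 = 0" unfolding E1_def energy_def by simp
      then show False using E1p by simp
    qed
    have mS: "(\<lambda>z. - u (Suc k) z) \<in> borel_measurable lborel"
      using borel_measurable_integrable[OF intS] measurable_cong_sets[OF setsS refl] by blast
    have "(\<lambda>z. indicator \<Omega> z *\<^sub>R (c * (- u k z) ^ CARD('n) * f z)) \<in> borel_measurable borel"
    proof (rule borel_measurable_continuous_on_indicator[OF Osets])
      have "continuous_on \<Omega> (u k)" "continuous_on \<Omega> f"
        using ucont fcont continuous_on_subset closure_subset by blast+
      then show "continuous_on \<Omega> (\<lambda>z. c * (- u k z) ^ CARD('n) * f z)"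
        by (intro continuous_intros)
    qed
    moreover have "(\<lambda>z. indicator \<Omega> z *\<^sub>R (c * (- u k z) ^ CARD('n) * f z)) = d"
      by (rule ext) (simp add: d_def)
    ultimately have dm: "d \<in> borel_measurable lborel" by simp
    have E1eq: "E1 = (1 / N) * (LINT z|lborel. d z *\<^sub>R (- u (Suc k) z))"
      unfolding E1_def energy_def N_def nuS
      by (subst integral_density) (use mS dm dnn in auto)
    have intD: "integrable lborel (\<lambda>z. d z *\<^sub>R (- u (Suc k) z))"
      using intS unfolding nuS by (subst (asm) integrable_density) (use mS dm dnn in auto)
    define H where "H z = indicator \<Omega> z * f z * \<bar>u k z\<bar> ^ CARD('n) * \<bar>u (Suc k) z\<bar>" for z
    have dH: "d z * \<bar>u (Suc k) z\<bar> = c * H z" for z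
      unfolding d_def H_def using uneg[of z k]
      by (cases "z \<in> \<Omega>") (auto simp: abs_of_nonpos)
    have intG: "integrable lborel (\<lambda>z. c * H z)"
    proof -
      have "integrable lborel (\<lambda>z. norm (d z *\<^sub>R (- u (Suc k) z)))"
        using intD by (rule integrable_norm)
      moreover have "norm (d z *\<^sub>R (- u (Suc k) z)) = c * H z" for z
        using dnn[of z] dH[of z] by (simp add: abs_mult)
      ultimately show ?thesis by simp
    qed
    have E1le: "E1 \<le> (1 / N) * (c * (LINT z|lborel. H z))"
    proof -
      have "(LINT z|lborel. d z *\<^sub>R (- u (Suc k) z)) \<le> (LINT z|lborel. c * H z)"
      proof (rule integral_mono[OF intD intG])
        fix z show "d z *\<^sub>R (- u (Suc k) z) \<le> c * H z"
          using dnn[of z] mult_left_mono[of "- u (Suc k) z" "\<bar>u (Suc k) z\<bar>" "d z"]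
          by (simp flip: dH)
      qed
      also have "\<dots> = c * (LINT z|lborel. H z)" by simp
      finally show ?thesis unfolding E1eq
        by (rule mult_left_mono) (use Np in simp)
    qed
    have cp: "c > 0"
    proof (rule ccontr)
      assume "\<not> c > 0" then have "c = 0" using cnn by simp
      then show False using E1le E1p by simp
    qed
    have Ap: "A k > 0"
    proof (rule ccontr)
      assume "\<not> A k > 0" then have "A k = 0" using Ann[of k] by simp
      then show False using cp unfolding c_def I_eq by simp
    qed
    have intH: "integrable lborel H"
      using integrable_mult_right[OF intG, of "1/c"] cp by simp
    have intAi: "integrable lborel (\<lambda>z. indicator \<Omega> z * \<bar>u i z\<bar> ^ (CARD('n) + 1) * f z)"
      if "A i > 0" for i
    proof (rule ccontr)
      assume "\<not> ?thesis"
      then have "A i = 0" unfolding A_def by (rule not_integrable_integral_eq)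
      then show False using that by simp
    qed
    define al where "al = A k powr (1 / N)"
    define be where "be = A (Suc k) powr (1 / N)"
    have alp: "al > 0" using Ap al_def by simp
    have bep: "be > 0" using Bp be_def by simp
    have powN: "(X powr (1 / N)) ^ (CARD('n) + 1) = X" if "X > 0" for X
    proof -
      have "(X powr (1 / N)) ^ (CARD('n) + 1) = (X powr (1 / N)) powr N"
        using that powr_realpow[of "X powr (1/N)" "CARD('n) + 1"] by (simp add: N_def add.commute)
      also have "\<dots> = X" using Np that by (simp add: powr_powr)
      finally show ?thesis .
    qed
    have wF: "(\<lambda>z. (indicator \<Omega> z * f z) * \<bar>u i z\<bar> ^ (CARD('n) + 1)) =
        (\<lambda>z. indicator \<Omega> z * \<bar>u i z\<bar> ^ (CARD('n) + 1) * f z)" for i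
      by (rule ext) (simp add: ac_simps)
    have Hold: "(LINT z|lborel. (indicator \<Omega> z * f z) * \<bar>u k z\<bar> ^ CARD('n) * \<bar>u (Suc k) z\<bar>)
        \<le> al ^ CARD('n) * be"
    proof (rule holder_nat[where w="\<lambda>z. indicator \<Omega> z * f z" and F="\<lambda>z. \<bar>u k z\<bar>"
          and G="\<lambda>z. \<bar>u (Suc k) z\<bar>" and n="CARD('n)" and \<alpha>=al and \<beta>=be and M=lborel])
      show "\<And>x. 0 \<le> indicator \<Omega> x * f x" by (auto simp: indicator_def fpos less_imp_le)
      show "\<And>x. 0 \<le> \<bar>u k x\<bar>" by simp
      show "\<And>x. 0 \<le> \<bar>u (Suc k) x\<bar>" by simp
      show "integrable lborel (\<lambda>x. indicator \<Omega> x * f x * \<bar>u k x\<bar> ^ (CARD('n) + 1))"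
        using intAi[OF Ap] by (simp only: wF)
      show "integrable lborel (\<lambda>x. indicator \<Omega> x * f x * \<bar>u (Suc k) x\<bar> ^ (CARD('n) + 1))"
        using intAi[OF Bp] by (simp only: wF)
      show "integrable lborel (\<lambda>x. indicator \<Omega> x * f x * \<bar>u k x\<bar> ^ CARD('n) * \<bar>u (Suc k) x\<bar>)"
        using intH unfolding H_def .
      show "0 < al" "0 < be" using alp bep by auto
      have "al ^ (CARD('n) + 1) = A k" using powN[OF Ap] al_def by simp
      also have "\<dots> = (LINT x|lborel. indicator \<Omega> x * f x * \<bar>u k x\<bar> ^ (CARD('n) + 1))"
        by (simp only: A_def wF)
      finally show "al ^ (CARD('n) + 1) = (LINT x|lborel. indicator \<Omega> x * f x * \<bar>u k x\<bar> ^ (CARD('n) + 1))" .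
      have "be ^ (CARD('n) + 1) = A (Suc k)" using powN[OF Bp] be_def by simp
      also have "\<dots> = (LINT x|lborel. indicator \<Omega> x * f x * \<bar>u (Suc k) x\<bar> ^ (CARD('n) + 1))"
        by (simp only: A_def wF)
      finally show "be ^ (CARD('n) + 1) = (LINT x|lborel. indicator \<Omega> x * f x * \<bar>u (Suc k) x\<bar> ^ (CARD('n) + 1))" .
    qed
    have HI: "(LINT z|lborel. H z) \<le> al ^ CARD('n) * be"
      using Hold unfolding H_def .
    have c_eq: "c = N * E0 / al ^ (CARD('n) + 1)"
      unfolding c_def I_eq al_def using powN[OF Ap] Np by simp
    have "E1 \<le> (1 / N) * (c * (al ^ CARD('n) * be))"
      using E1le HI cp Np by (smt (verit) mult_left_mono divide_pos_pos)
    also have "\<dots> = E0 * be / al" unfolding c_eq using alp Np by (simp add: field_simps)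
    finally have "E1 / be \<le> E0 / al" using alp bep by (simp add: field_simps)
    then show ?thesis unfolding Lnorm_eq E0_def[symmetric] E1_def[symmetric] al_def be_def .
  qed
qed

end
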